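(* In the two-flow network-coding model, the conditional success probabilities of an arriving type-1 packet are: $$\mathbb{P}(\text{success}\mid L=0)=1-e^{-\mu d};$$ $$\mathbb{P}(\text{success}\mid L=1)=\mathbb{P}(\text{success}\mid L=2,N=1)=\mathbb{P}(\text{success}\mid L=2,N=3)=\int_0^d \mu e^{-\mu t}e^{-\lambda_1 t}(1+\lambda_2 t)e^{-\lambda_2 t}\big(1-e^{-\mu(d-t)}\big)\,dt;$$ $$\mathbb{P}(\text{success}\mid L=2,N=2)=\int_0^d \mu e^{-\mu t}e^{-\lambda_1 t}e^{-\lambda_2 t}\big(1-e^{-\mu(d-t)}\big)\,dt.$$
   Context: Two-flow network-coding model: a single server with one extra waiting ("buffer") position. Type-1 and type-2 packets arrive according to independent Poisson processes with rates $\lambda_1,\lambda_2>0$. Service times are i.i.d. exponential with rate $\mu>0$, independent of arrivals; service is non-preemptive. A packet arriving to an empty system immediately enters service. A packet arriving while the server is busy and the buffer is empty is placed in the buffer. If the buffer holds a native (type-1 or type-2) packet of the other flow, the arriving packet is XOR-coded with it, and the buffer then holds one coded packet (type-3). If the buffer holds a native packet of the same flow, or a coded packet, the buffered packet is discarded and replaced by the arriving packet. When the server becomes free, the buffered packet (if any) enters service. Every native packet arriving at time $s$ has absolute deadline $s+d$ (fixed $d>0$); a buffered native packet is removed when its deadline expires, and a coded packet is removed when the later of the two deadlines of its constituent native packets expires. A type-1 packet is successfully served if it (or the coded packet containing it) completes service no later than its own absolute deadline. State seen by the arriving packet: $L\in\{0,1,2\}$ is the number of packets in the system including the one in service (coded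 packet counts as one), and when $L=2$, $N\in\{1,2,3\}$ is the type of the buffered packet. $\mathbb{P}(\text{success}\mid\cdot)$ is the probability that a type-1 packet arriving in the given state is successfully served. *)

theory Defs
  imports "HOL-Probability.Probability"
begin

(* BNat f tg dl : a native packet of flow f (1 or 2), tg = it is the tagged type-1 packet,
                  absolute deadline dl.
   BCoded tg dl : a coded (type-3) packet, tg = it contains the tagged packet,
                  dl = later of the two constituent deadlines. *)
datatype pbuf = BEmpty | BNat nat bool real | BCoded bool real

(* State seen by the arriving (tagged) packet:
   Idle         : L = 0
   Busy BEmpty  : L = 1
   Busy (BNat n _ _) : L = 2, N = n (n = 1, 2);  Busy (BCoded _ _) : L = 2, N = 3 *)
datatype sysstate = Idle | Busy pbuf

definition expire :: "real \<Rightarrow> pbuf \<Rightarrow> pbuf" where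
  "expire t b = (case b of
      BEmpty \<Rightarrow> BEmpty
    | BNat f tg dl \<Rightarrow> (if dl < t then BEmpty else b)
    | BCoded tg dl \<Rightarrow> (if dl < t then BEmpty else b))"

definition arrive :: "real \<Rightarrow> real \<Rightarrow> nat \<Rightarrow> bool \<Rightarrow> pbuf \<Rightarrow> pbuf" where
  "arrive d t f tg b = (case expire t b of
      BEmpty \<Rightarrow> BNat f tg (t + d)
    | BNat g tg' dl \<Rightarrow> (if g \<noteq> f then BCoded (tg \<or> tg') (max dl (t + d)) else BNat f tg (t + d))
    | BCoded tg' dl \<Rightarrow> BNat f tg (t + d))"

definition tagged :: "pbuf \<Rightarrow> bool" where
  "tagged b = (case b of BEmpty \<Rightarrow> False | BNat f tg dl \<Rightarrow> tg | BCoded tg dl \<Rightarrow> tg)"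

(* The tagged type-1 packet arrives at time 0 (deadline d) in state st.
   R = residual service time of the packet in service, S = service time of the
   tagged packet (or the coded packet containing it), arrs = time-ordered list of
   (arrival time, flow) of the later arrivals before time R. *)
definition success :: "real \<Rightarrow> sysstate \<Rightarrow> real \<Rightarrow> real \<Rightarrow> (real \<times> nat) list \<Rightarrow> bool" where
  "success d st R S arrs = (case st of
      Idle \<Rightarrow> S \<le> d
    | Busy b \<Rightarrow>
        (let b1 = arrive d 0 1 True b;
             bR = expire R (foldl (\<lambda>bb (t, f). arrive d t f False bb) b1 arrs)
         in tagged bR \<and> R + S \<le> d))"

datatype rv_idx = Resid | Serv | IA1 nat | IA2 nat

definition ia :: "nat \<Rightarrow> nat \<Rightarrow> rv_idx" where
  "ia f k = (if f = 1 then IA1 k else IA2 k)"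

definition arr_time :: "(rv_idx \<Rightarrow> 'a \<Rightarrow> real) \<Rightarrow> nat \<Rightarrow> nat \<Rightarrow> 'a \<Rightarrow> real" where
  "arr_time X f n \<omega> = (\<Sum>k\<le>n. X (ia f k) \<omega>)"

definition arr_times :: "(rv_idx \<Rightarrow> 'a \<Rightarrow> real) \<Rightarrow> nat \<Rightarrow> 'a \<Rightarrow> real set" where
  "arr_times X f \<omega> = {arr_time X f n \<omega> | n. arr_time X f n \<omega> < X Resid \<omega>}"

(* time-ordered list of (arrival time, flow) of all arrivals before the residual service
   time ends (simultaneous arrivals have probability 0) *)
definition arrivals :: "(rv_idx \<Rightarrow> 'a \<Rightarrow> real) \<Rightarrow> 'a \<Rightarrow> (real \<times> nat) list" where
  "arrivals X \<omega> = map (\<lambda>t. (t, if t \<in> arr_times X 1 \<omega> then 1 else 2))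
     (sorted_list_of_set (arr_times X 1 \<omega> \<union> arr_times X 2 \<omega>))"

definition succ_prob :: "'a measure \<Rightarrow> (rv_idx \<Rightarrow> 'a \<Rightarrow> real) \<Rightarrow> real \<Rightarrow> sysstate \<Rightarrow> real" where
  "succ_prob M X d st =
     measure M {\<omega> \<in> space M. success d st (X Resid \<omega>) (X Serv \<omega>) (arrivals X \<omega>)}"

end

theory Submission
  imports Defs
begin



definition stp :: "real \<Rightarrow> pbuf \<Rightarrow> real \<times> nat \<Rightarrow> pbuf" where
  "stp d = (\<lambda>bb (t, f). arrive d t f False bb)"
lemma untag_expire: "\<not> tagged b \<Longrightarrow> \<not> tagged (expire t b)"
  by (cases b) (simp_all add: expire_def tagged_def)
lemma untag_arrive: "\<not> tagged b \<Longrightarrow> \<not> tagged (arrive d t f False b)"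
  using untag_expire[of b t] unfolding arrive_def by (cases "expire t b") (simp_all add: tagged_def)
lemma untag_stp: "\<not> tagged b \<Longrightarrow> \<not> tagged (stp d b x)"
  by (cases x) (simp add: stp_def untag_arrive)
lemma untag_foldl: "\<not> tagged b \<Longrightarrow> \<not> tagged (foldl (stp d) b L)"
  by (induction L arbitrary: b) (simp_all add: untag_stp)
lemma coded_step: "\<not> tagged (stp d (BCoded True D) x)"
  by (cases x) (simp add: stp_def arrive_def expire_def tagged_def)

lemma tagged_coded:
  "tagged (expire R (foldl (stp d) (BCoded True D) L)) \<longleftrightarrow> L = [] \<and> R \<le> D"
proof (cases L)
  case Nil then show ?thesis by (simp add: expire_def tagged_def)
next
  case (Cons x L')
  have "\<not> tagged (expire R (foldl (stp d) (stp d (BCoded True D) x) L'))"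
    by (intro untag_expire untag_foldl coded_step)
  then show ?thesis using Cons by simp
qed

lemma tagged_nat:
  assumes "\<forall>x\<in>set L. snd x = 1 \<or> snd x = 2"
  shows "tagged (expire R (foldl (stp d) (BNat 1 True D) L)) \<longleftrightarrow>
     (L = [] \<and> R \<le> D) \<or> (\<exists>t. L = [(t, 2)] \<and> t \<le> D \<and> R \<le> max D (t + d))"
proof (cases L)
  case Nil then show ?thesis by (simp add: expire_def tagged_def)
next
  case (Cons x L')
  obtain t f where x: "x = (t, f)" by (cases x)
  have f: "f = 1 \<or> f = 2" using assms Cons x by auto
  show ?thesis
  proof (cases "D < t \<or> f = 1")
    case True
    then have "\<not> tagged (stp d (BNat 1 True D) x)"
      by (auto simp: x stp_def arrive_def expire_def tagged_def)
    then have "\<not> tagged (expire R (foldl (stp d) (stp d (BNat 1 True D) x) L'))"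
      by (intro untag_expire untag_foldl)
    then show ?thesis using Cons x True by auto
  next
    case False
    then have f2': "f = 2" using f by auto
    have st: "stp d (BNat 1 True D) x = BCoded True (max D (t + d))"
      using False f2' by (simp add: x stp_def arrive_def expire_def)
    show ?thesis
      using Cons x st tagged_coded[of R d "max D (t + d)" L'] False f2' by auto
  qed
qed


lemma V_inf_iff:
  fixes a :: "nat \<Rightarrow> real"
  shows "infinite {a n | n. a n < r} \<longleftrightarrow> (\<forall>N. \<exists>n. a n < r \<and> (\<forall>k\<le>N. a k \<noteq> a n))"
proof
  assume inf: "infinite {a n | n. a n < r}"
  show "\<forall>N. \<exists>n. a n < r \<and> (\<forall>k\<le>N. a k \<noteq> a n)"
  proof
    fix N
    have fin: "finite (a ` {..N})" by simp
    have "\<not> {a n | n. a n < r} \<subseteq> a ` {..N}"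
    proof
      assume "{a n | n. a n < r} \<subseteq> a ` {..N}"
      then have "finite {a n | n. a n < r}" using fin by (rule finite_subset)
      then show False using inf by contradiction
    qed
    then obtain x where x: "x \<in> {a n | n. a n < r}" "x \<notin> a ` {..N}" by (meson subsetI)
    then obtain n where n: "x = a n" "a n < r" by blast
    have "\<forall>k\<le>N. a k \<noteq> a n"
    proof (intro allI impI)
      fix k assume "k \<le> N"
      then have "a k \<in> a ` {..N}" by simp
      then show "a k \<noteq> a n" using x(2) n(1) by metis
    qed
    then show "\<exists>n. a n < r \<and> (\<forall>k\<le>N. a k \<noteq> a n)" using n(2) by blast
  qed
next
  assume H: "\<forall>N. \<exists>n. a n < r \<and> (\<forall>k\<le>N. a k \<noteq> a n)"
  show "infinite {a n | n. a n < r}"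
  proof
    assume fin: "finite {a n | n. a n < r}"
    have sub: "{a n | n. a n < r} \<subseteq> a ` {n. a n < r}" by blast
    define V where "V = {a n | n. a n < r}"
    have "\<exists>C\<subseteq>{n. a n < r}. finite C \<and> V = a ` C"
      unfolding V_def by (rule finite_subset_image[OF fin sub])
    then obtain C where C': "C \<subseteq> {n. a n < r} \<and> finite C \<and> V = a ` C" ..
    have C: "C \<subseteq> {n. a n < r}" "finite C" "V = a ` C" using C' by simp_all
    from finite_nat_bounded[OF C(2)] obtain N where N0: "C \<subseteq> {..<N}" ..
    have N: "c \<le> N" if "c \<in> C" for c using N0 that by auto
    obtain n where n: "a n < r" "\<forall>k\<le>N. a k \<noteq> a n" using H by blast
    have "a n \<in> {a n | n. a n < r}" using n(1) by blast
    then have "a n \<in> a ` C" using C(3) unfolding V_def by simp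
    then obtain c where c: "c \<in> C" "a n = a c" by (rule imageE)
    then show False using N[OF c(1)] n(2) by auto
  qed
qed

lemma V_single_iff:
  fixes a :: "nat \<Rightarrow> real"
  shows "(\<exists>t. {a n | n. a n < r} = {t} \<and> P t) \<longleftrightarrow>
    (\<exists>n. a n < r) \<and> (\<forall>n m. a n < r \<longrightarrow> a m < r \<longrightarrow> a n = a m) \<and> (\<forall>n. a n < r \<longrightarrow> P (a n))"
proof
  assume "\<exists>t. {a n | n. a n < r} = {t} \<and> P t"
  then obtain t where t: "{a n | n. a n < r} = {t} \<and> P t" ..
  have eq: "a n = t" if "a n < r" for n
  proof -
    have "a n \<in> {a n | n. a n < r}" using that by auto
    then show ?thesis using t by simp
  qed
  have "t \<in> {a n | n. a n < r}" using t by simp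
  then obtain n0 where n0: "a n0 < r" by auto
  have Pt: "P t" using t by simp
  have "\<forall>n. a n < r \<longrightarrow> P (a n)" using Pt eq by metis
  moreover have "\<forall>n m. a n < r \<longrightarrow> a m < r \<longrightarrow> a n = a m" using eq by metis
  ultimately show "(\<exists>n. a n < r) \<and> (\<forall>n m. a n < r \<longrightarrow> a m < r \<longrightarrow> a n = a m) \<and> (\<forall>n. a n < r \<longrightarrow> P (a n))"
    using n0 by auto
next
  assume H: "(\<exists>n. a n < r) \<and> (\<forall>n m. a n < r \<longrightarrow> a m < r \<longrightarrow> a n = a m) \<and> (\<forall>n. a n < r \<longrightarrow> P (a n))"
  then obtain n0 where n0: "a n0 < r" by auto
  have H2: "\<forall>n m. a n < r \<longrightarrow> a m < r \<longrightarrow> a n = a m" using H by (rule conjE) (rule conjunct1)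
  have H3: "\<forall>n. a n < r \<longrightarrow> P (a n)" using H by (rule conjE) (rule conjunct2)
  have all: "a n = a n0" if "a n < r" for n using H2 that n0 by blast
  have eq: "{a n | n. a n < r} = {a n0}"
  proof (rule set_eqI)
    fix x show "x \<in> {a n | n. a n < r} \<longleftrightarrow> x \<in> {a n0}"
    proof
      assume "x \<in> {a n | n. a n < r}"
      then obtain n where "x = a n" "a n < r" by (auto simp del: )
      then show "x \<in> {a n0}" using all[of n] by simp
    next
      assume "x \<in> {a n0}"
      then show "x \<in> {a n | n. a n < r}" using n0 by auto
    qed
  qed
  have "P (a n0)" using H3 n0 by blast
  then show "\<exists>t. {a n | n. a n < r} = {t} \<and> P t" by (intro exI[of _ "a n0"]) (simp add: eq)
qed


lemma arrivals_labels: "\<forall>x\<in>set (arrivals X \<omega>). snd x = 1 \<or> snd x = 2"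
  unfolding arrivals_def by simp

lemma sls_inf: "infinite A \<Longrightarrow> sorted_list_of_set A = []"
  by (simp add: sorted_list_of_set.fold_insort_key.infinite)

lemma sls_Nil_iff: "sorted_list_of_set A = [] \<longleftrightarrow> A = {} \<or> infinite A"
  using sls_inf by (cases "finite A") auto

lemma arrivals_Nil_iff:
  "arrivals X \<omega> = [] \<longleftrightarrow>
     (arr_times X 1 \<omega> = {} \<and> arr_times X 2 \<omega> = {}) \<or> infinite (arr_times X 1 \<omega>) \<or> infinite (arr_times X 2 \<omega>)"
  unfolding arrivals_def by (simp add: sls_Nil_iff)

lemma ex_simps_aux: "(\<exists>t. (A \<and> Q t) \<and> P t) \<longleftrightarrow> A \<and> (\<exists>t. Q t \<and> P t)"
  by blast

lemma map_single: "map (\<lambda>t. (t, g t)) xs = [(t, c)] \<longleftrightarrow> xs = [t] \<and> g t = c"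
  by (cases xs) auto

lemma arrivals_single_iff:
  "(\<exists>t. arrivals X \<omega> = [(t, 2)] \<and> P t) \<longleftrightarrow>
     arr_times X 1 \<omega> = {} \<and> (\<exists>t. arr_times X 2 \<omega> = {t} \<and> P t)"
proof -
  let ?A = "arr_times X 1 \<omega>" and ?B = "arr_times X 2 \<omega>"
  have key: "sorted_list_of_set (?A \<union> ?B) = [t] \<longleftrightarrow> ?A \<union> ?B = {t}" for t
  proof
    assume h: "sorted_list_of_set (?A \<union> ?B) = [t]"
    then have fin: "finite (?A \<union> ?B)" by (metis list.distinct(1) sls_inf)
    show "?A \<union> ?B = {t}" using set_sorted_list_of_set[OF fin] h by simp
  next
    assume "?A \<union> ?B = {t}"
    then show "sorted_list_of_set (?A \<union> ?B) = [t]" by simp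
  qed
  have e1: "arrivals X \<omega> = [(t, 2)] \<longleftrightarrow> sorted_list_of_set (?A \<union> ?B) = [t] \<and> t \<notin> ?A" for t
    unfolding arrivals_def map_single by simp
  have e2: "(?A \<union> ?B = {t} \<and> t \<notin> ?A) \<longleftrightarrow> ?A = {} \<and> ?B = {t}" for t by auto
  have e3: "(\<exists>t. arrivals X \<omega> = [(t, 2)] \<and> P t) \<longleftrightarrow> (\<exists>t. (?A = {} \<and> ?B = {t}) \<and> P t)"
    by (simp only: e1 key e2)
  show ?thesis unfolding e3 by (rule ex_simps_aux)
qed




lemma succ_busy: "success d (Busy b) R S arrs =
   (tagged (expire R (foldl (stp d) (arrive d 0 1 True b) arrs)) \<and> R + S \<le> d)"
  by (simp add: success_def stp_def Let_def)

lemma b1_empty: "arrive d 0 1 True BEmpty = BNat 1 True d"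
  by (simp add: arrive_def expire_def)
lemma b1_nat1: "0 < dl0 \<Longrightarrow> arrive d 0 1 True (BNat 1 False dl0) = BNat 1 True d"
  by (simp add: arrive_def expire_def)
lemma b1_coded: "0 < dl0 \<Longrightarrow> arrive d 0 1 True (BCoded False dl0) = BNat 1 True d"
  by (simp add: arrive_def expire_def)
lemma b1_nat2: "0 < dl0 \<Longrightarrow> dl0 \<le> d \<Longrightarrow> arrive d 0 1 True (BNat 2 False dl0) = BCoded True d"
  by (simp add: arrive_def expire_def max_def)

abbreviation "EE X f \<omega> \<equiv> (\<forall>n. \<not> arr_time X f n \<omega> < X Resid \<omega>)"
abbreviation "II X f \<omega> \<equiv> (\<forall>N. \<exists>n. arr_time X f n \<omega> < X Resid \<omega> \<and> (\<forall>k\<le>N. arr_time X f k \<omega> \<noteq> arr_time X f n \<omega>))"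
abbreviation "SG X d \<omega> \<equiv> (\<exists>n. arr_time X 2 n \<omega> < X Resid \<omega>) \<and>
   (\<forall>n m. arr_time X 2 n \<omega> < X Resid \<omega> \<longrightarrow> arr_time X 2 m \<omega> < X Resid \<omega> \<longrightarrow> arr_time X 2 n \<omega> = arr_time X 2 m \<omega>) \<and>
   (\<forall>n. arr_time X 2 n \<omega> < X Resid \<omega> \<longrightarrow> arr_time X 2 n \<omega> \<le> d \<and> X Resid \<omega> \<le> max d (arr_time X 2 n \<omega> + d))"

lemma empty_iff: "arr_times X f \<omega> = {} \<longleftrightarrow> EE X f \<omega>"
  unfolding arr_times_def by auto

lemma inf_iff: "infinite (arr_times X f \<omega>) \<longleftrightarrow> II X f \<omega>"
  unfolding arr_times_def by (rule V_inf_iff)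

lemma single_iff: "(\<exists>t. arr_times X 2 \<omega> = {t} \<and> t \<le> d \<and> X Resid \<omega> \<le> max d (t + d)) \<longleftrightarrow> SG X d \<omega>"
  unfolding arr_times_def by (rule V_single_iff)

lemma succ_gen1:
  assumes "arrive d 0 1 True b = BNat 1 True d"
  shows "success d (Busy b) (X Resid \<omega>) (X Serv \<omega>) (arrivals X \<omega>) \<longleftrightarrow>
    X Resid \<omega> + X Serv \<omega> \<le> d \<and>
    (((EE X 1 \<omega> \<and> EE X 2 \<omega>) \<or> II X 1 \<omega> \<or> II X 2 \<omega>) \<and> X Resid \<omega> \<le> d \<or> EE X 1 \<omega> \<and> SG X d \<omega>)"
proof -
  let ?R = "X Resid \<omega>" and ?S = "X Serv \<omega>" and ?L = "arrivals X \<omega>"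
  have e0: "tagged (expire ?R (foldl (stp d) (BNat 1 True d) ?L)) \<longleftrightarrow>
     (?L = [] \<and> ?R \<le> d) \<or> (\<exists>t. ?L = [(t, 2)] \<and> t \<le> d \<and> ?R \<le> max d (t + d))"
    by (rule tagged_nat[OF arrivals_labels])
  have e1: "success d (Busy b) ?R ?S ?L \<longleftrightarrow> ?R + ?S \<le> d \<and>
     ((?L = [] \<and> ?R \<le> d) \<or> (\<exists>t. ?L = [(t, 2)] \<and> t \<le> d \<and> ?R \<le> max d (t + d)))"
    unfolding succ_busy assms e0 by (rule conj_commute)
  have e2: "(\<exists>t. ?L = [(t, 2)] \<and> t \<le> d \<and> ?R \<le> max d (t + d)) \<longleftrightarrow> EE X 1 \<omega> \<and> SG X d \<omega>"
    unfolding arrivals_single_iff[of X \<omega> "\<lambda>t. t \<le> d \<and> X Resid \<omega> \<le> max d (t + d)"] single_iff empty_iff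
    by (rule refl)
  have e3: "?L = [] \<longleftrightarrow> (EE X 1 \<omega> \<and> EE X 2 \<omega>) \<or> II X 1 \<omega> \<or> II X 2 \<omega>"
    unfolding arrivals_Nil_iff empty_iff inf_iff by (rule refl)
  show ?thesis by (simp only: e1 e2 e3)
qed

lemma succ_gen2:
  assumes "arrive d 0 1 True b = BCoded True d"
  shows "success d (Busy b) (X Resid \<omega>) (X Serv \<omega>) (arrivals X \<omega>) \<longleftrightarrow>
    X Resid \<omega> + X Serv \<omega> \<le> d \<and>
    (((EE X 1 \<omega> \<and> EE X 2 \<omega>) \<or> II X 1 \<omega> \<or> II X 2 \<omega>) \<and> X Resid \<omega> \<le> d)"
proof -
  let ?R = "X Resid \<omega>" and ?S = "X Serv \<omega>" and ?L = "arrivals X \<omega>"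
  have e1: "success d (Busy b) ?R ?S ?L \<longleftrightarrow> ?R + ?S \<le> d \<and> (?L = [] \<and> ?R \<le> d)"
    unfolding succ_busy assms tagged_coded by (rule conj_commute)
  have e3: "?L = [] \<longleftrightarrow> (EE X 1 \<omega> \<and> EE X 2 \<omega>) \<or> II X 1 \<omega> \<or> II X 2 \<omega>"
    unfolding arrivals_Nil_iff empty_iff inf_iff by (rule refl)
  show ?thesis by (simp only: e1 e3)
qed



lemma ia_simps[simp]: "ia 1 k = IA1 k" "ia (Suc 0) k = IA1 k" "ia 2 k = IA2 k"
  by (simp_all add: ia_def)

context
  fixes X :: "rv_idx \<Rightarrow> 'a \<Rightarrow> real" and f :: nat and \<omega> :: 'a
  assumes pos: "\<And>k. 0 < X (ia f k) \<omega>"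
begin

lemma at_Suc: "arr_time X f (Suc n) \<omega> = arr_time X f n \<omega> + X (ia f (Suc n)) \<omega>"
  unfolding arr_time_def by simp

lemma at_less: "m < n \<Longrightarrow> arr_time X f m \<omega> < arr_time X f n \<omega>"
  by (rule lift_Suc_mono_less[of "\<lambda>n. arr_time X f n \<omega>"]) (simp_all add: at_Suc pos)

lemma at_le: "m \<le> n \<Longrightarrow> arr_time X f m \<omega> \<le> arr_time X f n \<omega>"
  using at_less[of m n] by (cases "m = n") auto

lemma at_ge: "X (ia f k) \<omega> \<le> arr_time X f k \<omega>"
  unfolding arr_time_def by (rule member_le_sum) (auto intro: less_imp_le pos)

lemma at_0: "arr_time X f 0 \<omega> = X (ia f 0) \<omega>"
  unfolding arr_time_def by simp

lemma at_1: "arr_time X f 1 \<omega> = X (ia f 0) \<omega> + X (ia f 1) \<omega>"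
  unfolding arr_time_def by (simp add: numeral_eq_Suc)

lemma EE_iff: "EE X f \<omega> \<longleftrightarrow> X Resid \<omega> \<le> X (ia f 0) \<omega>"
proof
  assume "EE X f \<omega>"
  then have "\<not> arr_time X f 0 \<omega> < X Resid \<omega>" by blast
  then show "X Resid \<omega> \<le> X (ia f 0) \<omega>" by (simp add: at_0)
next
  assume h: "X Resid \<omega> \<le> X (ia f 0) \<omega>"
  show "EE X f \<omega>"
  proof
    fix n
    have "X (ia f 0) \<omega> \<le> arr_time X f n \<omega>" using at_le[of 0 n] by (simp add: at_0)
    then show "\<not> arr_time X f n \<omega> < X Resid \<omega>" using h by simp
  qed
qed

lemma II_false:
  assumes fin: "\<exists>k. d \<le> X (ia f k) \<omega>" and R: "X Resid \<omega> < d"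
  shows "\<not> II X f \<omega>"
proof
  assume H: "II X f \<omega>"
  obtain k where k: "d \<le> X (ia f k) \<omega>" using fin by blast
  obtain n where n: "arr_time X f n \<omega> < X Resid \<omega>" "\<forall>j\<le>k. arr_time X f j \<omega> \<noteq> arr_time X f n \<omega>"
    using H by blast
  have "k < n"
  proof (rule ccontr)
    assume "\<not> k < n" then have "n \<le> k" by simp
    then show False using n(2) by blast
  qed
  then have "arr_time X f k \<omega> < arr_time X f n \<omega>" by (rule at_less)
  then show False using at_ge[of k] k n(1) R by simp
qed

end

lemma SG_iff:
  assumes pos: "\<And>k. 0 < X (IA2 k) \<omega>" and R: "X Resid \<omega> < d"
  shows "SG X d \<omega> \<longleftrightarrow> X (IA2 0) \<omega> < X Resid \<omega> \<and> X Resid \<omega> \<le> X (IA2 0) \<omega> + X (IA2 1) \<omega>"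
proof -
  have pos': "\<And>k. 0 < X (ia 2 k) \<omega>" using pos by simp
  note L = at_less[of X 2 \<omega>, OF pos'] at_le[of X 2 \<omega>, OF pos']
  have a0: "arr_time X 2 0 \<omega> = X (IA2 0) \<omega>" using at_0[of X 2 \<omega>, OF pos'] by simp
  have a1: "arr_time X 2 1 \<omega> = X (IA2 0) \<omega> + X (IA2 1) \<omega>" using at_1[of X 2 \<omega>, OF pos'] by simp
  show ?thesis
  proof
    assume H: "SG X d \<omega>"
    then obtain n where n: "arr_time X 2 n \<omega> < X Resid \<omega>" by blast
    have "arr_time X 2 0 \<omega> \<le> arr_time X 2 n \<omega>" using L(2)[of 0 n] by simp
    then have b0: "arr_time X 2 0 \<omega> < X Resid \<omega>" using n by simp
    have "\<not> arr_time X 2 1 \<omega> < X Resid \<omega>"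
    proof
      assume "arr_time X 2 1 \<omega> < X Resid \<omega>"
      then have "arr_time X 2 0 \<omega> = arr_time X 2 1 \<omega>" using H b0 by blast
      then show False using L(1)[of 0 1] by simp
    qed
    then show "X (IA2 0) \<omega> < X Resid \<omega> \<and> X Resid \<omega> \<le> X (IA2 0) \<omega> + X (IA2 1) \<omega>"
      using b0 a0 a1 by simp
  next
    assume H: "X (IA2 0) \<omega> < X Resid \<omega> \<and> X Resid \<omega> \<le> X (IA2 0) \<omega> + X (IA2 1) \<omega>"
    have only0: "n = 0" if "arr_time X 2 n \<omega> < X Resid \<omega>" for n
    proof (rule ccontr)
      assume "n \<noteq> 0" then have "1 \<le> n" by simp
      then have "arr_time X 2 1 \<omega> \<le> arr_time X 2 n \<omega>" by (rule L(2))
      then show False using that H a1 by simp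
    qed
    have ex: "\<exists>n. arr_time X 2 n \<omega> < X Resid \<omega>" using H a0 by (intro exI[of _ 0]) simp
    have uq: "\<forall>n m. arr_time X 2 n \<omega> < X Resid \<omega> \<longrightarrow> arr_time X 2 m \<omega> < X Resid \<omega> \<longrightarrow>
        arr_time X 2 n \<omega> = arr_time X 2 m \<omega>"
      using only0 by metis
    have cond: "\<forall>n. arr_time X 2 n \<omega> < X Resid \<omega> \<longrightarrow> arr_time X 2 n \<omega> \<le> d \<and> X Resid \<omega> \<le> max d (arr_time X 2 n \<omega> + d)"
      using R by (auto intro: less_imp_le)
    show "SG X d \<omega>" using ex uq cond by (intro conjI)
  qed
qed

lemma char_common:
  assumes pos1: "\<And>k. 0 < X (IA1 k) \<omega>" and pos2: "\<And>k. 0 < X (IA2 k) \<omega>"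
    and fin1: "\<exists>k. d \<le> X (IA1 k) \<omega>" and fin2: "\<exists>k. d \<le> X (IA2 k) \<omega>"
    and R: "X Resid \<omega> < d"
  shows "\<not> II X 1 \<omega>" "\<not> II X 2 \<omega>"
    "EE X 1 \<omega> \<longleftrightarrow> X Resid \<omega> \<le> X (IA1 0) \<omega>"
    "EE X 2 \<omega> \<longleftrightarrow> X Resid \<omega> \<le> X (IA2 0) \<omega>"
proof -
  have p1: "\<And>k. 0 < X (ia 1 k) \<omega>" using pos1 by simp
  have p2: "\<And>k. 0 < X (ia 2 k) \<omega>" using pos2 by simp
  show "\<not> II X 1 \<omega>" using II_false[of X 1 \<omega> d, OF p1] fin1 R by simp
  show "\<not> II X 2 \<omega>" using II_false[of X 2 \<omega> d, OF p2] fin2 R by simp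
  show "EE X 1 \<omega> \<longleftrightarrow> X Resid \<omega> \<le> X (IA1 0) \<omega>" using EE_iff[of X 1 \<omega>, OF p1] by simp
  show "EE X 2 \<omega> \<longleftrightarrow> X Resid \<omega> \<le> X (IA2 0) \<omega>" using EE_iff[of X 2 \<omega>, OF p2] by simp
qed

lemma char1:
  assumes pos1: "\<And>k. 0 < X (IA1 k) \<omega>" and pos2: "\<And>k. 0 < X (IA2 k) \<omega>"
    and fin1: "\<exists>k. d \<le> X (IA1 k) \<omega>" and fin2: "\<exists>k. d \<le> X (IA2 k) \<omega>"
    and Spos: "0 < X Serv \<omega>"
  shows "(X Resid \<omega> + X Serv \<omega> \<le> d \<and>
    (((EE X 1 \<omega> \<and> EE X 2 \<omega>) \<or> II X 1 \<omega> \<or> II X 2 \<omega>) \<and> X Resid \<omega> \<le> d \<or> EE X 1 \<omega> \<and> SG X d \<omega>))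
    \<longleftrightarrow> (X Resid \<omega> + X Serv \<omega> \<le> d \<and> X Resid \<omega> \<le> X (IA1 0) \<omega> \<and> X Resid \<omega> \<le> X (IA2 0) \<omega> + X (IA2 1) \<omega>)"
proof (cases "X Resid \<omega> + X Serv \<omega> \<le> d")
  case False then show ?thesis by simp
next
  case True
  then have R: "X Resid \<omega> < d" using Spos by simp
  note c = char_common[where X=X and \<omega>=\<omega> and d=d, OF pos1 pos2 fin1 fin2 R]
  note sg = SG_iff[where X=X and \<omega>=\<omega> and d=d, OF pos2 R]
  have b1: "0 < X (IA2 1) \<omega>" using pos2 by simp
  have ii: "((EE X 1 \<omega> \<and> EE X 2 \<omega>) \<or> II X 1 \<omega> \<or> II X 2 \<omega>) \<longleftrightarrow> (EE X 1 \<omega> \<and> EE X 2 \<omega>)"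
    using c(1,2) by blast
  show ?thesis unfolding ii unfolding c(3,4) sg using True R b1 by auto
qed

lemma char2:
  assumes pos1: "\<And>k. 0 < X (IA1 k) \<omega>" and pos2: "\<And>k. 0 < X (IA2 k) \<omega>"
    and fin1: "\<exists>k. d \<le> X (IA1 k) \<omega>" and fin2: "\<exists>k. d \<le> X (IA2 k) \<omega>"
    and Spos: "0 < X Serv \<omega>"
  shows "(X Resid \<omega> + X Serv \<omega> \<le> d \<and>
    (((EE X 1 \<omega> \<and> EE X 2 \<omega>) \<or> II X 1 \<omega> \<or> II X 2 \<omega>) \<and> X Resid \<omega> \<le> d))
    \<longleftrightarrow> (X Resid \<omega> + X Serv \<omega> \<le> d \<and> X Resid \<omega> \<le> X (IA1 0) \<omega> \<and> X Resid \<omega> \<le> X (IA2 0) \<omega>)"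
proof (cases "X Resid \<omega> + X Serv \<omega> \<le> d")
  case False then show ?thesis by simp
next
  case True
  then have R: "X Resid \<omega> < d" using Spos by simp
  note c = char_common[where X=X and \<omega>=\<omega> and d=d, OF pos1 pos2 fin1 fin2 R]
  have ii: "((EE X 1 \<omega> \<and> EE X 2 \<omega>) \<or> II X 1 \<omega> \<or> II X 2 \<omega>) \<longleftrightarrow> (EE X 1 \<omega> \<and> EE X 2 \<omega>)"
    using c(1,2) by blast
  show ?thesis unfolding ii unfolding c(3,4) using True R by auto
qed




lemma cond_lemma:
  fixes X :: "'a \<Rightarrow> real" and Y :: "'a \<Rightarrow> 'b"
  assumes P: "prob_space M" and rvX: "X \<in> borel_measurable M" and rvY: "Y \<in> measurable M N"
    and joint: "distr M borel X \<Otimes>\<^sub>M distr M N Y = distr M (borel \<Otimes>\<^sub>M N) (\<lambda>x. (X x, Y x))"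
    and D: "distributed M lborel X g" and E: "E \<in> sets (borel \<Otimes>\<^sub>M N)"
  shows "emeasure M {\<omega>\<in>space M. (X \<omega>, Y \<omega>) \<in> E} =
    (\<integral>\<^sup>+x. g x * emeasure M {\<omega>\<in>space M. (x, Y \<omega>) \<in> E} \<partial>lborel)"
proof -
  interpret prob_space M by fact
  have "distr M borel X = distr M lborel X" by (rule distr_cong) auto
  also have "\<dots> = density lborel g" using distributed_distr_eq_density[OF D] .
  finally have dX: "distr M borel X = density lborel g" .
  interpret Y: prob_space "distr M N Y" by (rule prob_space_distr[OF rvY])
  have gm: "g \<in> borel_measurable lborel" using distributed_borel_measurable[OF D] .
  have XY: "(\<lambda>x. (X x, Y x)) \<in> measurable M (borel \<Otimes>\<^sub>M N)" using rvX rvY by (rule measurable_Pair)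
  have "sets (density lborel g \<Otimes>\<^sub>M distr M N Y) = sets (borel \<Otimes>\<^sub>M N)"
    by (rule sets_pair_measure_cong) simp_all
  then have E': "E \<in> sets (density lborel g \<Otimes>\<^sub>M distr M N Y)" using E by simp
  have "emeasure M {\<omega>\<in>space M. (X \<omega>, Y \<omega>) \<in> E} = emeasure (distr M (borel \<Otimes>\<^sub>M N) (\<lambda>x. (X x, Y x))) E"
    by (subst emeasure_distr[OF XY E]) (auto intro!: arg_cong[where f="emeasure M"])
  also have "\<dots> = emeasure (density lborel g \<Otimes>\<^sub>M distr M N Y) E"
    using joint dX by simp
  also have "\<dots> = (\<integral>\<^sup>+x. emeasure (distr M N Y) (Pair x -` E) \<partial>density lborel g)"
    by (rule Y.emeasure_pair_measure_alt[OF E'])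
  also have "\<dots> = (\<integral>\<^sup>+x. g x * emeasure (distr M N Y) (Pair x -` E) \<partial>lborel)"
  proof (rule nn_integral_density[OF gm])
    have "(\<lambda>x. emeasure (distr M N Y) (Pair x -` E)) \<in> borel_measurable (density lborel g)"
      by (rule Y.measurable_emeasure_Pair[OF E'])
    moreover have "measurable (density lborel g) borel = measurable lborel (borel :: ennreal measure)"
      by (rule measurable_cong_sets) simp_all
    ultimately show "(\<lambda>x. emeasure (distr M N Y) (Pair x -` E)) \<in> borel_measurable lborel"
      by simp
  qed
  also have "\<dots> = (\<integral>\<^sup>+x. g x * emeasure M {\<omega>\<in>space M. (x, Y \<omega>) \<in> E} \<partial>lborel)"
  proof (rule nn_integral_cong)
    fix x :: real assume "x \<in> space lborel"
    have Ex: "Pair x -` E \<in> sets N" using E by (rule sets_Pair1)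
    have "emeasure (distr M N Y) (Pair x -` E) = emeasure M (Y -` (Pair x -` E) \<inter> space M)"
      by (rule emeasure_distr[OF rvY Ex])
    also have "\<dots> = emeasure M {\<omega>\<in>space M. (x, Y \<omega>) \<in> E}"
      by (auto intro!: arg_cong[where f="emeasure M"])
    finally show "g x * emeasure (distr M N Y) (Pair x -` E) = g x * emeasure M {\<omega>\<in>space M. (x, Y \<omega>) \<in> E}"
      by simp
  qed
  finally show ?thesis .
qed


lemma indep_pair_compose:
  assumes P: "prob_space M" and ind: "prob_space.indep_var M N1 X1 N2 X2"
    and f: "f \<in> measurable N1 K1" and h: "h \<in> measurable N2 K2"
  shows "distr M K1 (\<lambda>x. f (X1 x)) \<Otimes>\<^sub>M distr M K2 (\<lambda>x. h (X2 x)) =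
         distr M (K1 \<Otimes>\<^sub>M K2) (\<lambda>x. (f (X1 x), h (X2 x)))"
proof -
  interpret prob_space M by fact
  have r1: "random_variable N1 X1" using indep_var_rv1[OF ind] .
  have r2: "random_variable N2 X2" using indep_var_rv2[OF ind] .
  have m1: "(\<lambda>x. f (X1 x)) \<in> measurable M K1" using measurable_comp[OF r1 f] by (simp add: comp_def)
  have m2: "(\<lambda>x. h (X2 x)) \<in> measurable M K2" using measurable_comp[OF r2 h] by (simp add: comp_def)
  have m12: "(\<lambda>x. (f (X1 x), h (X2 x))) \<in> measurable M (K1 \<Otimes>\<^sub>M K2)" using m1 m2 by (rule measurable_Pair)
  interpret A: prob_space "distr M K1 (\<lambda>x. f (X1 x))" by (rule prob_space_distr[OF m1])
  interpret B: prob_space "distr M K2 (\<lambda>x. h (X2 x))" by (rule prob_space_distr[OF m2])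
  show ?thesis
  proof (rule pair_measure_eqI)
    show "sigma_finite_measure (distr M K1 (\<lambda>x. f (X1 x)))" ..
    show "sigma_finite_measure (distr M K2 (\<lambda>x. h (X2 x)))" ..
    show "sets (distr M K1 (\<lambda>x. f (X1 x)) \<Otimes>\<^sub>M distr M K2 (\<lambda>x. h (X2 x))) =
      sets (distr M (K1 \<Otimes>\<^sub>M K2) (\<lambda>x. (f (X1 x), h (X2 x))))"
    proof -
      have "sets (distr M K1 (\<lambda>x. f (X1 x)) \<Otimes>\<^sub>M distr M K2 (\<lambda>x. h (X2 x))) = sets (K1 \<Otimes>\<^sub>M K2)"
        by (rule sets_pair_measure_cong) simp_all
      then show ?thesis by (simp only: sets_distr)
    qed
  next
    fix A B assume A: "A \<in> sets (distr M K1 (\<lambda>x. f (X1 x)))" and B: "B \<in> sets (distr M K2 (\<lambda>x. h (X2 x)))"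
    then have A': "A \<in> sets K1" and B': "B \<in> sets K2" by simp_all
    have fA: "f -` A \<inter> space N1 \<in> sets N1" using f A' by (rule measurable_sets)
    have hB: "h -` B \<inter> space N2 \<in> sets N2" using h B' by (rule measurable_sets)
    have eq1: "(\<lambda>x. (X1 x, X2 x)) -` ((f -` A \<inter> space N1) \<times> (h -` B \<inter> space N2)) \<inter> space M
        = (\<lambda>x. (f (X1 x), h (X2 x))) -` (A \<times> B) \<inter> space M"
    proof (rule set_eqI)
      fix x
      show "x \<in> (\<lambda>x. (X1 x, X2 x)) -` ((f -` A \<inter> space N1) \<times> (h -` B \<inter> space N2)) \<inter> space M \<longleftrightarrow>
        x \<in> (\<lambda>x. (f (X1 x), h (X2 x))) -` (A \<times> B) \<inter> space M"
        using measurable_space[OF r1, of x] measurable_space[OF r2, of x] by (auto simp add: vimage_def)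
    qed
    have eq2: "X1 -` (f -` A \<inter> space N1) \<inter> space M = (\<lambda>x. f (X1 x)) -` A \<inter> space M"
      using measurable_space[OF r1] by (auto simp: vimage_def)
    have eq3: "X2 -` (h -` B \<inter> space N2) \<inter> space M = (\<lambda>x. h (X2 x)) -` B \<inter> space M"
      using measurable_space[OF r2] by (auto simp: vimage_def)
    have "prob ((\<lambda>x. (f (X1 x), h (X2 x))) -` (A \<times> B) \<inter> space M) =
      prob ((\<lambda>x. f (X1 x)) -` A \<inter> space M) * prob ((\<lambda>x. h (X2 x)) -` B \<inter> space M)"
      using indep_varD[OF ind fA hB] unfolding eq1 eq2 eq3 .
    then show "emeasure (distr M K1 (\<lambda>x. f (X1 x))) A * emeasure (distr M K2 (\<lambda>x. h (X2 x))) B =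
      emeasure (distr M (K1 \<Otimes>\<^sub>M K2) (\<lambda>x. (f (X1 x), h (X2 x)))) (A \<times> B)"
    proof -
      have AB: "A \<times> B \<in> sets (K1 \<Otimes>\<^sub>M K2)" using A' B' by simp
      show ?thesis
        unfolding emeasure_distr[OF m1 A'] emeasure_distr[OF m2 B'] emeasure_distr[OF m12 AB]
        unfolding emeasure_eq_measure \<open>prob _ = _\<close>
        by (simp add: ennreal_mult measure_nonneg)
    qed
  qed
qed



definition GG :: "nat \<Rightarrow> real \<Rightarrow> real \<Rightarrow> real" where
  "GG k l t = (\<Sum>n\<le>k. (l * t) ^ n * exp (- l * t) / fact n)"

lemma GG_nonneg: "0 \<le> l \<Longrightarrow> 0 \<le> t \<Longrightarrow> 0 \<le> GG k l t"
  unfolding GG_def by (intro sum_nonneg) simp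

lemma GG_cont: "continuous_on A (GG k l)"
  unfolding GG_def by (intro continuous_intros) auto

lemma GG_meas[measurable]: "GG k l \<in> borel_measurable borel"
  using GG_cont[of UNIV k l] by (rule borel_measurable_continuous_onI)

lemma erl_point:
  assumes P: "prob_space M" and D: "distributed M lborel Y g"
  shows "measure M {\<omega>\<in>space M. Y \<omega> = x} = 0"
proof -
  interpret prob_space M by fact
  have rv: "Y \<in> measurable M lborel" using distributed_measurable[OF D] .
  have gm: "g \<in> borel_measurable lborel" using distributed_borel_measurable[OF D] .
  have "emeasure M {\<omega>\<in>space M. Y \<omega> = x} = emeasure (distr M lborel Y) {x}"
    by (subst emeasure_distr[OF rv]) (auto intro!: arg_cong[where f="emeasure M"])
  also have "\<dots> = emeasure (density lborel g) {x}"
    by (simp only: distributed_distr_eq_density[OF D])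
  also have "\<dots> = (\<integral>\<^sup>+y. g y * indicator {x} y \<partial>lborel)"
    using gm by (subst emeasure_density) auto
  also have "\<dots> = 0"
  proof (rule nn_integral_zero')
    show "AE y in lborel. g y * indicator {x} y = 0"
      using AE_lborel_singleton[of x] by eventually_elim simp
  qed
  finally have e: "emeasure M {\<omega>\<in>space M. Y \<omega> = x} = 0" .
  show ?thesis unfolding measure_def e by simp
qed

lemma erl_ge:
  assumes P: "prob_space M" and D: "distributed M lborel Y (erlang_density k l)"
    and l: "0 < l" and x: "0 \<le> x"
  shows "measure M {\<omega>\<in>space M. x \<le> Y \<omega>} = GG k l x"
proof -
  interpret prob_space M by fact
  have rv[measurable]: "Y \<in> borel_measurable M"
    using distributed_measurable[OF D] by simp
  have "{\<omega>\<in>space M. x \<le> Y \<omega>} = {\<omega>\<in>space M. x < Y \<omega>} \<union> {\<omega>\<in>space M. Y \<omega> = x}" by auto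
  then have "measure M {\<omega>\<in>space M. x \<le> Y \<omega>} = measure M {\<omega>\<in>space M. x < Y \<omega>} + measure M {\<omega>\<in>space M. Y \<omega> = x}"
  proof -
    have A: "{\<omega>\<in>space M. x < Y \<omega>} \<in> sets M" by measurable
    have B: "{\<omega>\<in>space M. Y \<omega> = x} \<in> sets M" by measurable
    have "{\<omega>\<in>space M. x < Y \<omega>} \<inter> {\<omega>\<in>space M. Y \<omega> = x} = {}" by auto
    from finite_measure_Union[OF A B this] show ?thesis using \<open>_ = _ \<union> _\<close> by simp
  qed
  also have "measure M {\<omega>\<in>space M. Y \<omega> = x} = 0" by (rule erl_point[OF P D])
  also have "measure M {\<omega>\<in>space M. x < Y \<omega>} = 1 - erlang_CDF k l x"
    by (rule erlang_distributed_gt[OF D l x])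
  finally show ?thesis using x by (simp add: erlang_CDF_def GG_def)
qed

lemma exp_le:
  assumes P: "prob_space M" and D: "distributed M lborel Y (exponential_density l)"
    and l: "0 < l"
  shows "measure M {\<omega>\<in>space M. Y \<omega> \<le> a} = (if 0 \<le> a then 1 - exp (- l * a) else 0)"
proof -
  interpret prob_space M by fact
  have rv[measurable]: "Y \<in> borel_measurable M"
    using distributed_measurable[OF D] by simp
  show ?thesis
  proof (cases "0 \<le> a")
    case True
    then show ?thesis using exponential_distributedD_le[OF D True l] by (simp add: mult.commute)
  next
    case False
    have "measure M {\<omega>\<in>space M. Y \<omega> \<le> a} \<le> measure M {\<omega>\<in>space M. Y \<omega> \<le> 0}"
      using False by (intro finite_measure_mono) auto
    also have "\<dots> = 0" using exponential_distributedD_le[OF D _ l, of 0] by simp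
    finally show ?thesis using False measure_nonneg[of M] by (simp add: antisym)
  qed
qed



lemma nn_int_interval:
  fixes f :: "real \<Rightarrow> real"
  assumes c: "continuous_on {a..b} f" and nn: "\<And>x. x \<in> {a..b} \<Longrightarrow> 0 \<le> f x"
  shows "(\<integral>\<^sup>+x. ennreal (indicator {a..b} x * f x) \<partial>lborel) = ennreal (integral {a..b} f)"
proof -
  have "f integrable_on {a..b}" using c by (rule integrable_continuous_interval)
  then have "(f has_integral integral {a..b} f) {a..b}" by (rule integrable_integral)
  then have h: "((\<lambda>x. if x \<in> {a..b} then f x else 0) has_integral integral {a..b} f) UNIV"
    by (simp only: has_integral_restrict_UNIV)
  have eq: "(\<lambda>x. indicator {a..b} x * f x) = (\<lambda>x. if x \<in> {a..b} then f x else 0)"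
    by (rule ext) (simp add: indicator_def)
  have m: "(\<lambda>x. indicator {a..b} x *\<^sub>R f x) \<in> borel_measurable borel"
    by (rule borel_measurable_continuous_on_indicator) (simp_all add: c)
  show ?thesis
  proof (rule nn_integral_has_integral_lborel)
    show "(\<lambda>x. indicator {a..b} x * f x) \<in> borel_measurable borel" using m by simp
    show "0 \<le> indicator {a..b} x * f x" for x using nn[of x] by (simp add: indicator_def)
    show "((\<lambda>x. indicator {a..b} x * f x) has_integral integral {a..b} f) UNIV"
      unfolding eq by (rule h)
  qed
qed




definition FF :: "real \<Rightarrow> nat \<Rightarrow> real \<Rightarrow> nat \<Rightarrow> real \<Rightarrow> real \<Rightarrow> real \<Rightarrow> real" where
  "FF mu k2 l2 k3 l3 d t = mu * exp (- mu * t) * GG k2 l2 t * GG k3 l3 t * (1 - exp (- mu * (d - t)))"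

lemma F_main:
  fixes V :: "nat \<Rightarrow> 'a \<Rightarrow> real"
  assumes P: "prob_space M" and ind: "prob_space.indep_vars M (\<lambda>_. borel) V {0,1,2,3}"
    and D0: "distributed M lborel (V 0) (exponential_density mu)"
    and D1: "distributed M lborel (V 1) (exponential_density mu)"
    and D2: "distributed M lborel (V 2) (erlang_density k2 l2)"
    and D3: "distributed M lborel (V 3) (erlang_density k3 l3)"
    and mu: "0 < mu" and l2: "0 < l2" and l3: "0 < l3" and d: "0 < d"
  shows "measure M {\<omega>\<in>space M. V 0 \<omega> + V 1 \<omega> \<le> d \<and> V 0 \<omega> \<le> V 2 \<omega> \<and> V 0 \<omega> \<le> V 3 \<omega>}
     = integral {0..d} (FF mu k2 l2 k3 l3 d)"
proof -
  interpret prob_space M by fact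
  have rvall: "random_variable borel (V i)" if "i \<in> {0,1,2,3}" for i
    using ind that unfolding indep_vars_def by blast
  have [measurable]: "V 0 \<in> borel_measurable M" "V 1 \<in> borel_measurable M"
    "V 2 \<in> borel_measurable M" "V 3 \<in> borel_measurable M" using rvall by auto
  define N where "N = PiM {1,2,3::nat} (\<lambda>_. borel :: real measure)"
  define W where "W = (\<lambda>\<omega>. restrict (\<lambda>i. V i \<omega>) {1,2,3::nat})"
  have iv: "indep_var (PiM {0} (\<lambda>_. borel)) (\<lambda>\<omega>. restrict (\<lambda>i. V i \<omega>) {0}) N W"
    unfolding N_def W_def by (rule indep_var_restrict[OF ind]) auto
  have Wm: "W \<in> measurable M N"
    unfolding N_def W_def by (rule measurable_restrict) (use rvall in auto)
  have c0: "(\<lambda>v. v 0) \<in> measurable (PiM {0::nat} (\<lambda>_. borel)) (borel :: real measure)"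
    by (rule measurable_component_singleton) simp
  have cid: "(\<lambda>v. v) \<in> measurable N N" by simp
  note joint0 = indep_pair_compose[OF P iv c0 cid]
  have e1: "(\<lambda>x. (\<lambda>i\<in>{0::nat}. V i x) 0) = V 0" by (rule ext) simp
  have e2: "(\<lambda>x. ((\<lambda>i\<in>{0::nat}. V i x) 0, W x)) = (\<lambda>x. (V 0 x, W x))" by (rule ext) simp
  have joint: "distr M borel (V 0) \<Otimes>\<^sub>M distr M N W = distr M (borel \<Otimes>\<^sub>M N) (\<lambda>x. (V 0 x, W x))"
    using joint0 by (simp only: e1 e2)
  define E where "E = {p \<in> space (borel \<Otimes>\<^sub>M N). fst p + snd p 1 \<le> d \<and> fst p \<le> snd p 2 \<and> fst p \<le> snd p 3}"
  have sn: "(\<lambda>p. snd p j) \<in> borel_measurable (borel \<Otimes>\<^sub>M N)" if "j \<in> {1,2,3}" for j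
    unfolding N_def by (rule measurable_compose[OF measurable_snd measurable_component_singleton]) (use that in simp)
  have [measurable]: "(\<lambda>p. snd p 1) \<in> borel_measurable (borel \<Otimes>\<^sub>M N)"
     "(\<lambda>p. snd p 2) \<in> borel_measurable (borel \<Otimes>\<^sub>M N)" "(\<lambda>p. snd p 3) \<in> borel_measurable (borel \<Otimes>\<^sub>M N)"
    using sn by auto
  have Em: "E \<in> sets (borel \<Otimes>\<^sub>M N)"
    unfolding E_def by measurable
  have rv0: "V 0 \<in> borel_measurable M" by simp
  note C = cond_lemma[OF P rv0 Wm joint D0 Em]
  have W_space: "W \<omega> \<in> space N" for \<omega> unfolding W_def N_def by (simp add: space_PiM)
  have W_app: "W \<omega> 1 = V 1 \<omega>" "W \<omega> (Suc 0) = V (Suc 0) \<omega>" "W \<omega> 2 = V 2 \<omega>" "W \<omega> 3 = V 3 \<omega>" for \<omega> unfolding W_def by simp_all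
  have set1: "{\<omega>\<in>space M. (V 0 \<omega>, W \<omega>) \<in> E} = {\<omega>\<in>space M. V 0 \<omega> + V 1 \<omega> \<le> d \<and> V 0 \<omega> \<le> V 2 \<omega> \<and> V 0 \<omega> \<le> V 3 \<omega>}"
    unfolding E_def using W_space by (auto simp: space_pair_measure W_app)
  have set2: "{\<omega>\<in>space M. (x, W \<omega>) \<in> E} = {\<omega>\<in>space M. V 1 \<omega> \<le> d - x \<and> x \<le> V 2 \<omega> \<and> x \<le> V 3 \<omega>}" for x
    unfolding E_def using W_space by (auto simp: space_pair_measure W_app)
  have inner: "prob {\<omega>\<in>space M. V 1 \<omega> \<le> d - x \<and> x \<le> V 2 \<omega> \<and> x \<le> V 3 \<omega>} =
      prob {\<omega>\<in>space M. V 1 \<omega> \<le> d - x} * prob {\<omega>\<in>space M. x \<le> V 2 \<omega>} * prob {\<omega>\<in>space M. x \<le> V 3 \<omega>}" for x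
  proof -
    define A where "A = (\<lambda>i::nat. if i = 1 then {..d - x} else {x..})"
    have "prob (\<Inter>i\<in>{1,2,3}. V i -` A i \<inter> space M) = (\<Prod>i\<in>{1,2,3}. prob (V i -` A i \<inter> space M))"
      by (rule indep_varsD[OF ind]) (auto simp: A_def)
    moreover have "(\<Inter>i\<in>{1,2,3}. V i -` A i \<inter> space M) = {\<omega>\<in>space M. V 1 \<omega> \<le> d - x \<and> x \<le> V 2 \<omega> \<and> x \<le> V 3 \<omega>}"
      by (auto simp: A_def)
    moreover have "V 1 -` A 1 \<inter> space M = {\<omega>\<in>space M. V 1 \<omega> \<le> d - x}" by (auto simp: A_def)
    moreover have "V 2 -` A 2 \<inter> space M = {\<omega>\<in>space M. x \<le> V 2 \<omega>}" by (auto simp: A_def)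
    moreover have "V 3 -` A 3 \<inter> space M = {\<omega>\<in>space M. x \<le> V 3 \<omega>}" by (auto simp: A_def)
    ultimately show ?thesis by (simp add: mult.assoc)
  qed
  have pt: "ennreal (exponential_density mu x) * emeasure M {\<omega>\<in>space M. (x, W \<omega>) \<in> E} =
      ennreal (indicator {0..d} x * FF mu k2 l2 k3 l3 d x)" for x
  proof -
    have em: "emeasure M {\<omega>\<in>space M. (x, W \<omega>) \<in> E} =
      ennreal (prob {\<omega>\<in>space M. V 1 \<omega> \<le> d - x} * prob {\<omega>\<in>space M. x \<le> V 2 \<omega>} * prob {\<omega>\<in>space M. x \<le> V 3 \<omega>})"
      unfolding set2 emeasure_eq_measure inner ..
    show ?thesis
    proof (cases "x < 0")
      case True
      then show ?thesis by (simp add: exponential_density_def indicator_def)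
    next
      case False
      then have x0: "0 \<le> x" by simp
      have g2: "prob {\<omega>\<in>space M. x \<le> V 2 \<omega>} = GG k2 l2 x" by (rule erl_ge[OF P D2 l2 x0])
      have g3: "prob {\<omega>\<in>space M. x \<le> V 3 \<omega>} = GG k3 l3 x" by (rule erl_ge[OF P D3 l3 x0])
      have g1: "prob {\<omega>\<in>space M. V 1 \<omega> \<le> d - x} = (if 0 \<le> d - x then 1 - exp (- mu * (d - x)) else 0)"
        by (rule exp_le[OF P D1 mu])
      show ?thesis
      proof (cases "x \<le> d")
        case True
        have nn: "0 \<le> GG k2 l2 x" "0 \<le> GG k3 l3 x" using GG_nonneg l2 l3 x0 by auto
        have nn2: "0 \<le> 1 - exp (- mu * (d - x))" using True mu by (simp add: mult_nonneg_nonneg)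
        have ed: "exponential_density mu x = mu * exp (- mu * x)" using x0 by (simp add: exponential_density_def mult.commute)
        show ?thesis unfolding em g1 g2 g3 ed using True x0 nn nn2 mu
          by (simp add: FF_def indicator_def ennreal_mult[symmetric] mult_ac)
      next
        case False
        then show ?thesis unfolding em g1 g2 g3 by (simp add: indicator_def)
      qed
    qed
  qed
  have cont: "continuous_on {0..d} (FF mu k2 l2 k3 l3 d)"
    unfolding FF_def by (intro continuous_intros GG_cont)
  have nnF: "0 \<le> FF mu k2 l2 k3 l3 d x" if "x \<in> {0..d}" for x
    using that mu GG_nonneg[of l2 x k2] GG_nonneg[of l3 x k3] l2 l3
    by (auto simp: FF_def intro!: mult_nonneg_nonneg)
  have "emeasure M {\<omega>\<in>space M. V 0 \<omega> + V 1 \<omega> \<le> d \<and> V 0 \<omega> \<le> V 2 \<omega> \<and> V 0 \<omega> \<le> V 3 \<omega>}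
      = (\<integral>\<^sup>+x. ennreal (indicator {0..d} x * FF mu k2 l2 k3 l3 d x) \<partial>lborel)"
    using C unfolding set1 pt .
  also have "\<dots> = ennreal (integral {0..d} (FF mu k2 l2 k3 l3 d))"
    by (rule nn_int_interval[OF cont nnF])
  finally have "emeasure M {\<omega>\<in>space M. V 0 \<omega> + V 1 \<omega> \<le> d \<and> V 0 \<omega> \<le> V 2 \<omega> \<and> V 0 \<omega> \<le> V 3 \<omega>} =
     ennreal (integral {0..d} (FF mu k2 l2 k3 l3 d))" .
  moreover have "0 \<le> integral {0..d} (FF mu k2 l2 k3 l3 d)"
    by (rule integral_nonneg[OF integrable_continuous_interval[OF cont] nnF])
  ultimately show ?thesis by (simp add: measure_def)
qed



lemma ae_pos:
  assumes P: "prob_space M" and D: "distributed M lborel Y (erlang_density k l)"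
  shows "AE \<omega> in M. 0 < Y \<omega>"
proof -
  interpret prob_space M by fact
  have rv: "Y \<in> measurable M lborel" using distributed_measurable[OF D] .
  have gm: "(\<lambda>x. ennreal (erlang_density k l x)) \<in> borel_measurable lborel"
    using distributed_borel_measurable[OF D] .
  have "AE x in lborel. 0 < ennreal (erlang_density k l x) \<longrightarrow> 0 < (x::real)"
    using AE_lborel_singleton[of "0::real"]
  proof eventually_elim
    case (elim x)
    show ?case
    proof
      assume "0 < ennreal (erlang_density k l x)"
      then have "\<not> x < 0" by (auto simp: erlang_density_def)
      then show "0 < x" using elim by simp
    qed
  qed
  then have "AE x in density lborel (\<lambda>x. ennreal (erlang_density k l x)). 0 < x"
    by (subst AE_density[OF gm])
  then have "AE x in distr M lborel Y. 0 < x"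
    by (simp only: distributed_distr_eq_density[OF D])
  then show ?thesis by (rule AE_distrD[OF rv])
qed

lemma ae_fin:
  fixes e :: "nat \<Rightarrow> 'i"
  assumes P: "prob_space M" and ind: "prob_space.indep_vars M (\<lambda>_. borel) X UNIV"
    and inj: "inj e"
    and D: "\<And>k. distributed M lborel (X (e k)) (exponential_density l)"
    and l: "0 < l" and d: "0 < d"
  shows "AE \<omega> in M. \<exists>k. d \<le> X (e k) \<omega>"
proof -
  interpret prob_space M by fact
  have rv[measurable]: "X i \<in> borel_measurable M" for i
    using ind unfolding indep_vars_def by blast
  have rve[measurable]: "(\<lambda>\<omega>. X (e k) \<omega>) \<in> borel_measurable M" for k using rv[of "e k"] by simp
  define q where "q = 1 - exp (- d * l)"
  have q0: "0 \<le> q" and q1: "q < 1" using d l by (auto simp: q_def)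
  define N0 where "N0 = {\<omega>\<in>space M. \<forall>k. X (e k) \<omega> < d}"
  have N0m: "N0 \<in> sets M" unfolding N0_def by measurable
  have pk: "prob (X (e k) -` {..<d} \<inter> space M) \<le> q" for k
  proof -
    have "prob (X (e k) -` {..<d} \<inter> space M) \<le> prob {\<omega>\<in>space M. X (e k) \<omega> \<le> d}"
      by (intro finite_measure_mono) auto
    also have "\<dots> = q" unfolding q_def using exponential_distributedD_le[OF D _ l, of d] d by simp
    finally show ?thesis .
  qed
  have bound: "prob N0 \<le> q ^ n" for n
  proof -
    have "N0 \<subseteq> (\<Inter>i\<in>e ` {..n}. X i -` {..<d} \<inter> space M)" unfolding N0_def by auto
    then have "prob N0 \<le> prob (\<Inter>i\<in>e ` {..n}. X i -` {..<d} \<inter> space M)"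
      by (intro finite_measure_mono) auto
    also have "\<dots> = (\<Prod>i\<in>e ` {..n}. prob (X i -` {..<d} \<inter> space M))"
      by (rule indep_varsD[OF ind]) auto
    also have "\<dots> = (\<Prod>k\<le>n. prob (X (e k) -` {..<d} \<inter> space M))"
      by (subst prod.reindex) (use inj in \<open>auto simp: inj_on_def inj_def\<close>)
    also have "\<dots> \<le> (\<Prod>k\<le>n. q)"
      by (intro prod_mono) (auto simp: pk)
    also have "\<dots> = q ^ Suc n" by simp
    also have "\<dots> \<le> q ^ n" using q0 q1 by (simp add: mult_left_le_one_le)
    finally show ?thesis .
  qed
  have lim: "(\<lambda>n. q ^ n) \<longlonglongrightarrow> 0" using q0 q1 by (intro LIMSEQ_power_zero) simp
  have "prob N0 \<le> 0" by (rule LIMSEQ_le_const[OF lim]) (use bound in auto)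
  then have "emeasure M N0 = 0" using measure_nonneg[of M N0] by (simp add: emeasure_eq_measure)
  then have "N0 \<in> null_sets M" using N0m by auto
  moreover have "{\<omega>\<in>space M. \<not> (\<exists>k. d \<le> X (e k) \<omega>)} \<subseteq> N0" unfolding N0_def by (auto simp: not_le)
  ultimately show ?thesis by (rule AE_I')
qed


lemma indep_blocks:
  assumes P: "prob_space M" and ind: "prob_space.indep_vars M (\<lambda>_. borel) X UNIV"
    and K: "disjoint_family_on K L"
    and h: "\<And>j. j \<in> L \<Longrightarrow> h j \<in> borel_measurable (PiM (K j) (\<lambda>_. borel))"
    and V: "\<And>j \<omega>. j \<in> L \<Longrightarrow> V j \<omega> = h j (restrict (\<lambda>i. X i \<omega>) (K j))"
  shows "prob_space.indep_vars M (\<lambda>_. borel) V L"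
proof -
  interpret prob_space M by fact
  have "indep_vars (\<lambda>j. PiM (K j) (\<lambda>_. borel)) (\<lambda>j \<omega>. restrict (\<lambda>i. X i \<omega>) (K j)) L"
    by (rule indep_vars_restrict[OF ind]) (use K in auto)
  then have "indep_vars (\<lambda>_. borel) (\<lambda>j \<omega>. h j (restrict (\<lambda>i. X i \<omega>) (K j))) L"
    by (rule indep_vars_compose2) (rule h)
  moreover have "indep_vars (\<lambda>_. borel) (\<lambda>j \<omega>. h j (restrict (\<lambda>i. X i \<omega>) (K j))) L \<longleftrightarrow> indep_vars (\<lambda>_. borel) V L"
    by (rule indep_vars_cong) (auto simp: V fun_eq_iff)
  ultimately show ?thesis by simp
qed



theorem mainTheorem5:
  fixes M :: "'a measure" and X :: "rv_idx \<Rightarrow> 'a \<Rightarrow> real"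
    and lam1 lam2 mu d :: real
  assumes "prob_space M"
    and "lam1 > 0" and "lam2 > 0" and "mu > 0" and "d > 0"
    and "prob_space.indep_vars M (\<lambda>_. borel) X UNIV"
    and "distributed M lborel (X Resid) (exponential_density mu)"
    and "distributed M lborel (X Serv) (exponential_density mu)"
    and "\<And>k. distributed M lborel (X (IA1 k)) (exponential_density lam1)"
    and "\<And>k. distributed M lborel (X (IA2 k)) (exponential_density lam2)"
  shows "succ_prob M X d Idle = 1 - exp (- mu * d)
    \<and> succ_prob M X d (Busy BEmpty) =
        integral {0..d} (\<lambda>t. mu * exp (- mu * t) * exp (- lam1 * t) * (1 + lam2 * t)
                               * exp (- lam2 * t) * (1 - exp (- mu * (d - t))))
    \<and> (\<forall>dl0. 0 < dl0 \<and> dl0 \<le> d \<longrightarrow>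
          succ_prob M X d (Busy (BNat 1 False dl0)) = succ_prob M X d (Busy BEmpty)
        \<and> succ_prob M X d (Busy (BCoded False dl0)) = succ_prob M X d (Busy BEmpty)
        \<and> succ_prob M X d (Busy (BNat 2 False dl0)) =
            integral {0..d} (\<lambda>t. mu * exp (- mu * t) * exp (- lam1 * t)
                                   * exp (- lam2 * t) * (1 - exp (- mu * (d - t)))))"
  proof -
  note P = assms(1)
  interpret prob_space M by (rule assms(1))
  have ind: "indep_vars (\<lambda>_. borel) X UNIV" using assms(6) .
  have rv[measurable]: "X i \<in> borel_measurable M" for i using ind unfolding indep_vars_def by blast
  have at_m[measurable]: "(\<lambda>\<omega>. arr_time X f n \<omega>) \<in> borel_measurable M" for f n
    unfolding arr_time_def by (intro borel_measurable_sum) simp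
  have d0: "0 \<le> d" using assms(5) by simp
  have idle: "succ_prob M X d Idle = 1 - exp (- mu * d)"
    unfolding succ_prob_def success_def using exp_le[OF P assms(8) assms(4), of d] d0 by simp
  have aeS: "AE \<omega> in M. 0 < X Serv \<omega>" by (rule ae_pos[OF P assms(8)])
  have ae1: "AE \<omega> in M. \<forall>k. 0 < X (IA1 k) \<omega>"
    unfolding AE_all_countable using ae_pos[OF P assms(9)] by blast
  have ae2: "AE \<omega> in M. \<forall>k. 0 < X (IA2 k) \<omega>"
    unfolding AE_all_countable using ae_pos[OF P assms(10)] by blast
  have inj1: "inj IA1" by (simp add: inj_def)
  have inj2: "inj IA2" by (simp add: inj_def)
  have af1: "AE \<omega> in M. \<exists>k. d \<le> X (IA1 k) \<omega>" by (rule ae_fin[OF P ind inj1 assms(9) assms(2) assms(5)])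
  have af2: "AE \<omega> in M. \<exists>k. d \<le> X (IA2 k) \<omega>" by (rule ae_fin[OF P ind inj2 assms(10) assms(3) assms(5)])
  define T1 where "T1 = {\<omega>\<in>space M. X Resid \<omega> + X Serv \<omega> \<le> d \<and> X Resid \<omega> \<le> X (IA1 0) \<omega> \<and> X Resid \<omega> \<le> X (IA2 0) \<omega> + X (IA2 1) \<omega>}"
  define S1 where "S1 = {\<omega>\<in>space M. success d (Busy BEmpty) (X Resid \<omega>) (X Serv \<omega>) (arrivals X \<omega>)}"
  have g1: "success d (Busy BEmpty) (X Resid \<omega>) (X Serv \<omega>) (arrivals X \<omega>) \<longleftrightarrow>
    X Resid \<omega> + X Serv \<omega> \<le> d \<and>
    (((EE X 1 \<omega> \<and> EE X 2 \<omega>) \<or> II X 1 \<omega> \<or> II X 2 \<omega>) \<and> X Resid \<omega> \<le> d \<or> EE X 1 \<omega> \<and> SG X d \<omega>)" for \<omega>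
    by (rule succ_gen1[OF b1_empty])
  have S1m: "S1 \<in> sets M" unfolding S1_def g1 by measurable
  have T1m: "T1 \<in> sets M" unfolding T1_def by measurable
  have ae_eq1: "AE \<omega> in M. \<omega> \<in> S1 \<longleftrightarrow> \<omega> \<in> T1"
    using ae1 ae2 aeS af1 af2
  proof eventually_elim
    case (elim \<omega>)
    have c: "(X Resid \<omega> + X Serv \<omega> \<le> d \<and>
    (((EE X 1 \<omega> \<and> EE X 2 \<omega>) \<or> II X 1 \<omega> \<or> II X 2 \<omega>) \<and> X Resid \<omega> \<le> d \<or> EE X 1 \<omega> \<and> SG X d \<omega>))
    \<longleftrightarrow> (X Resid \<omega> + X Serv \<omega> \<le> d \<and> X Resid \<omega> \<le> X (IA1 0) \<omega> \<and> X Resid \<omega> \<le> X (IA2 0) \<omega> + X (IA2 1) \<omega>)"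
      by (rule char1) (use elim in auto)
    show ?case unfolding S1_def T1_def mem_Collect_eq g1 c by (rule refl)
  qed
  have m1: "measure M S1 = measure M T1" by (rule measure_eq_AE[OF ae_eq1 S1m T1m])
  have cmp: "(\<lambda>v. v i) \<in> borel_measurable (PiM A (\<lambda>_. borel :: real measure))" if "i \<in> A" for i A
    by (rule measurable_component_singleton) (rule that)
  define V1 :: "nat \<Rightarrow> 'a \<Rightarrow> real" where "V1 = (\<lambda>j. if j = 0 then X Resid else if j = 1 then X Serv
     else if j = 2 then X (IA1 0) else (\<lambda>\<omega>. X (IA2 0) \<omega> + X (IA2 1) \<omega>))"
  define K1 :: "nat \<Rightarrow> rv_idx set" where "K1 = (\<lambda>j. if j = 0 then {Resid} else if j = 1 then {Serv}
     else if j = 2 then {IA1 0} else {IA2 0, IA2 1})"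
  define h1 :: "nat \<Rightarrow> (rv_idx \<Rightarrow> real) \<Rightarrow> real" where "h1 = (\<lambda>j v. if j = 0 then v Resid else if j = 1 then v Serv
     else if j = 2 then v (IA1 0) else v (IA2 0) + v (IA2 1))"
  have indV1: "indep_vars (\<lambda>_. borel) V1 {0,1,2,3}"
  proof (rule indep_blocks[OF P ind])
    show "disjoint_family_on K1 {0,1,2,3}" by (auto simp: disjoint_family_on_def K1_def)
    show "h1 j \<in> borel_measurable (PiM (K1 j) (\<lambda>_. borel))" if "j \<in> {0,1,2,3}" for j
    proof -
      from that have "j = 0 \<or> j = 1 \<or> j = 2 \<or> j = 3" by auto
      then show ?thesis
        by (elim disjE) (simp_all add: h1_def K1_def cmp borel_measurable_add)
    qed
    show "V1 j \<omega> = h1 j (restrict (\<lambda>i. X i \<omega>) (K1 j))" if "j \<in> {0,1,2,3}" for j \<omega>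
      using that by (auto simp: V1_def h1_def K1_def)
  qed
  have DV0: "distributed M lborel (V1 0) (exponential_density mu)" using assms(7) by (simp add: V1_def)
  have DV1: "distributed M lborel (V1 1) (exponential_density mu)" using assms(8) by (simp add: V1_def)
  have DV2: "distributed M lborel (V1 2) (erlang_density 0 lam1)" using assms(9)[of 0] by (simp add: V1_def)
  have "distributed M lborel (\<lambda>x. \<Sum>i\<in>{IA2 0, IA2 1}. X i x) (erlang_density (card {IA2 0, IA2 1} - 1) lam2)"
    by (rule exponential_distributed_sum) (auto intro: indep_vars_subset[OF ind] simp: assms(10) assms(3))
  then have DV3: "distributed M lborel (V1 3) (erlang_density 1 lam2)" by (simp add: V1_def)
  note FV1 = F_main[OF P indV1 DV0 DV1 DV2 DV3 assms(4) assms(2) assms(3) assms(5)]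
  have setV1: "{\<omega>\<in>space M. V1 0 \<omega> + V1 1 \<omega> \<le> d \<and> V1 0 \<omega> \<le> V1 2 \<omega> \<and> V1 0 \<omega> \<le> V1 3 \<omega>} = T1"
    by (simp add: V1_def T1_def)
  have FF1: "FF mu 0 lam1 1 lam2 d = (\<lambda>t. mu * exp (- mu * t) * exp (- lam1 * t) * (1 + lam2 * t)
                               * exp (- lam2 * t) * (1 - exp (- mu * (d - t))))"
    by (rule ext) (simp add: FF_def GG_def algebra_simps)
  have empty: "succ_prob M X d (Busy BEmpty) =
        integral {0..d} (\<lambda>t. mu * exp (- mu * t) * exp (- lam1 * t) * (1 + lam2 * t)
                               * exp (- lam2 * t) * (1 - exp (- mu * (d - t))))"
    using FV1 unfolding succ_prob_def S1_def[symmetric] m1 setV1 FF1 .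
  define T2 where "T2 = {\<omega>\<in>space M. X Resid \<omega> + X Serv \<omega> \<le> d \<and> X Resid \<omega> \<le> X (IA1 0) \<omega> \<and> X Resid \<omega> \<le> X (IA2 0) \<omega>}"
  define S2 where "S2 = {\<omega>\<in>space M. X Resid \<omega> + X Serv \<omega> \<le> d \<and>
    (((EE X 1 \<omega> \<and> EE X 2 \<omega>) \<or> II X 1 \<omega> \<or> II X 2 \<omega>) \<and> X Resid \<omega> \<le> d)}"
  have S2m: "S2 \<in> sets M" unfolding S2_def by measurable
  have T2m: "T2 \<in> sets M" unfolding T2_def by measurable
  have ae_eq2: "AE \<omega> in M. \<omega> \<in> S2 \<longleftrightarrow> \<omega> \<in> T2"
    using ae1 ae2 aeS af1 af2
  proof eventually_elim
    case (elim \<omega>)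
    have c: "(X Resid \<omega> + X Serv \<omega> \<le> d \<and>
    (((EE X 1 \<omega> \<and> EE X 2 \<omega>) \<or> II X 1 \<omega> \<or> II X 2 \<omega>) \<and> X Resid \<omega> \<le> d))
    \<longleftrightarrow> (X Resid \<omega> + X Serv \<omega> \<le> d \<and> X Resid \<omega> \<le> X (IA1 0) \<omega> \<and> X Resid \<omega> \<le> X (IA2 0) \<omega>)"
      by (rule char2) (use elim in auto)
    show ?case unfolding S2_def T2_def mem_Collect_eq c by (rule refl)
  qed
  have m2: "measure M S2 = measure M T2" by (rule measure_eq_AE[OF ae_eq2 S2m T2m])
  define V2 :: "nat \<Rightarrow> 'a \<Rightarrow> real" where "V2 = (\<lambda>j. if j = 0 then X Resid else if j = 1 then X Serv
     else if j = 2 then X (IA1 0) else X (IA2 0))"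
  define K2 :: "nat \<Rightarrow> rv_idx set" where "K2 = (\<lambda>j. if j = 0 then {Resid} else if j = 1 then {Serv}
     else if j = 2 then {IA1 0} else {IA2 0})"
  define h2 :: "nat \<Rightarrow> (rv_idx \<Rightarrow> real) \<Rightarrow> real" where "h2 = (\<lambda>j v. if j = 0 then v Resid else if j = 1 then v Serv
     else if j = 2 then v (IA1 0) else v (IA2 0))"
  have indV2: "indep_vars (\<lambda>_. borel) V2 {0,1,2,3}"
  proof (rule indep_blocks[OF P ind])
    show "disjoint_family_on K2 {0,1,2,3}" by (auto simp: disjoint_family_on_def K2_def)
    show "h2 j \<in> borel_measurable (PiM (K2 j) (\<lambda>_. borel))" if "j \<in> {0,1,2,3}" for j
    proof -
      from that have "j = 0 \<or> j = 1 \<or> j = 2 \<or> j = 3" by auto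
      then show ?thesis
        by (elim disjE) (simp_all add: h2_def K2_def cmp)
    qed
    show "V2 j \<omega> = h2 j (restrict (\<lambda>i. X i \<omega>) (K2 j))" if "j \<in> {0,1,2,3}" for j \<omega>
      using that by (auto simp: V2_def h2_def K2_def)
  qed
  have EV0: "distributed M lborel (V2 0) (exponential_density mu)" using assms(7) by (simp add: V2_def)
  have EV1: "distributed M lborel (V2 1) (exponential_density mu)" using assms(8) by (simp add: V2_def)
  have EV2: "distributed M lborel (V2 2) (erlang_density 0 lam1)" using assms(9)[of 0] by (simp add: V2_def)
  have EV3: "distributed M lborel (V2 3) (erlang_density 0 lam2)" using assms(10)[of 0] by (simp add: V2_def)
  note FV2 = F_main[OF P indV2 EV0 EV1 EV2 EV3 assms(4) assms(2) assms(3) assms(5)]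
  have setV2: "{\<omega>\<in>space M. V2 0 \<omega> + V2 1 \<omega> \<le> d \<and> V2 0 \<omega> \<le> V2 2 \<omega> \<and> V2 0 \<omega> \<le> V2 3 \<omega>} = T2"
    by (simp add: V2_def T2_def)
  have FF2: "FF mu 0 lam1 0 lam2 d = (\<lambda>t. mu * exp (- mu * t) * exp (- lam1 * t)
                                   * exp (- lam2 * t) * (1 - exp (- mu * (d - t))))"
    by (rule ext) (simp add: FF_def GG_def algebra_simps)
  have nat2: "succ_prob M X d (Busy (BNat 2 False dl0)) =
            integral {0..d} (\<lambda>t. mu * exp (- mu * t) * exp (- lam1 * t)
                                   * exp (- lam2 * t) * (1 - exp (- mu * (d - t))))"
    if "0 < dl0" "dl0 \<le> d" for dl0
  proof -
    have g2: "success d (Busy (BNat 2 False dl0)) (X Resid \<omega>) (X Serv \<omega>) (arrivals X \<omega>) \<longleftrightarrow>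
      X Resid \<omega> + X Serv \<omega> \<le> d \<and>
      (((EE X 1 \<omega> \<and> EE X 2 \<omega>) \<or> II X 1 \<omega> \<or> II X 2 \<omega>) \<and> X Resid \<omega> \<le> d)" for \<omega>
      by (rule succ_gen2[OF b1_nat2[OF that]])
    show ?thesis using FV2 unfolding succ_prob_def g2 S2_def[symmetric] m2 setV2 FF2 .
  qed
  have same: "succ_prob M X d (Busy b) = succ_prob M X d (Busy BEmpty)"
    if "arrive d 0 1 True b = BNat 1 True d" for b
    unfolding succ_prob_def succ_busy that b1_empty ..
  show ?thesis
    using idle empty nat2 same[OF b1_nat1] same[OF b1_coded] by simp
qed


end
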